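(* For integers $n\ge m\ge 2$, $$f(S_m,\overline{K_n})\ge n+\min_{d}\max\left\{d-1+\left\lceil\frac{n}{d}\right\rceil,\ 2m-2-d\right\},$$ where the minimum is over positive integers $d$.
   Context: All graphs are finite and simple. $S_m=K_{1,m-1}$ is the star with $m$ vertices; $\overline{K_n}$ is the edgeless graph on $n$ vertices. A graph $G$ is $(H_1,H_2)$-full if every vertex of $G$ belongs to an induced subgraph isomorphic to $H_1$ and to an induced subgraph isomorphic to $H_2$; $f(H_1,H_2)$ is the minimum order of an $(H_1,H_2)$-full graph. *)

theory Defs
  imports Complex_Main
begin

definition simple_graph :: "'a set \<Rightarrow> ('a \<Rightarrow> 'a \<Rightarrow> bool) \<Rightarrow> bool" where
  "simple_graph V E \<longleftrightarrow> finite V \<and> V \<noteq> {} \<and>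
     (\<forall>x y. E x y \<longrightarrow> x \<in> V \<and> y \<in> V) \<and>
     (\<forall>x y. E x y \<longrightarrow> E y x) \<and> (\<forall>x. \<not> E x x)"

definition in_induced_copy ::
  "'a set \<Rightarrow> ('a \<Rightarrow> 'a \<Rightarrow> bool) \<Rightarrow> 'b set \<Rightarrow> ('b \<Rightarrow> 'b \<Rightarrow> bool) \<Rightarrow> 'a \<Rightarrow> bool" where
  "in_induced_copy V E W F v \<longleftrightarrow>
     (\<exists>\<phi> S. S \<subseteq> V \<and> v \<in> S \<and> bij_betw \<phi> W S \<and>
            (\<forall>x\<in>W. \<forall>y\<in>W. F x y \<longleftrightarrow> E (\<phi> x) (\<phi> y)))"

definition is_full ::
  "'a set \<Rightarrow> ('a \<Rightarrow> 'a \<Rightarrow> bool) \<Rightarrow> 'b set \<Rightarrow> ('b \<Rightarrow> 'b \<Rightarrow> bool)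
     \<Rightarrow> 'c set \<Rightarrow> ('c \<Rightarrow> 'c \<Rightarrow> bool) \<Rightarrow> bool" where
  "is_full V E W1 F1 W2 F2 \<longleftrightarrow>
     (\<forall>v\<in>V. in_induced_copy V E W1 F1 v \<and> in_induced_copy V E W2 F2 v)"

text \<open>f(H1,H2): minimum order of an (H1,H2)-full graph (graphs on vertices of type nat,
which is no loss of generality for finite graphs).\<close>
definition f_full ::
  "'b set \<Rightarrow> ('b \<Rightarrow> 'b \<Rightarrow> bool) \<Rightarrow> 'c set \<Rightarrow> ('c \<Rightarrow> 'c \<Rightarrow> bool) \<Rightarrow> nat" where
  "f_full W1 F1 W2 F2 = (LEAST k. \<exists>(V::nat set) E.
      simple_graph V E \<and> is_full V E W1 F1 W2 F2 \<and> card V = k)"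

text \<open>Star S_m = K_{1,m-1} on {0..<m}, centre 0.\<close>
definition star_V :: "nat \<Rightarrow> nat set" where "star_V m = {0..<m}"
definition star_E :: "nat \<Rightarrow> nat \<Rightarrow> nat \<Rightarrow> bool" where
  "star_E m x y \<longleftrightarrow> x < m \<and> y < m \<and> x \<noteq> y \<and> (x = 0 \<or> y = 0)"

definition empty_V :: "nat \<Rightarrow> nat set" where "empty_V n = {0..<n}"
definition empty_E :: "nat \<Rightarrow> nat \<Rightarrow> bool" where "empty_E x y \<longleftrightarrow> False"

end

theory Submission
  imports Defs
begin

lemma indep_copy:
  assumes "in_induced_copy V E (empty_V n) empty_E v"
  shows "\<exists>S. S \<subseteq> V \<and> v \<in> S \<and> card S = n \<and> (\<forall>x\<in>S. \<forall>y\<in>S. \<not> E x y)"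
proof -
  from assms obtain \<phi> S where S: "S \<subseteq> V" "v \<in> S" "bij_betw \<phi> {0..<n} S"
    and e: "\<forall>x\<in>{0..<n}. \<forall>y\<in>{0..<n}. \<not> E (\<phi> x) (\<phi> y)"
    unfolding in_induced_copy_def empty_V_def empty_E_def by auto
  have "card S = n" using bij_betw_same_card[OF S(3)] by simp
  moreover have "\<forall>x\<in>S. \<forall>y\<in>S. \<not> E x y"
  proof (intro ballI)
    fix x y assume "x \<in> S" "y \<in> S"
    then obtain i j where "i \<in> {0..<n}" "j \<in> {0..<n}" "x = \<phi> i" "y = \<phi> j"
      using bij_betw_imp_surj_on[OF S(3)] by blast
    then show "\<not> E x y" using e by auto
  qed
  ultimately show ?thesis using S by blast
qed

lemma star_copy:
  assumes m2: "2 \<le> m" and "in_induced_copy V E (star_V m) (star_E m) v"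
  shows "\<exists>c L. c \<in> V \<and> L \<subseteq> V \<and> card L = m - 1 \<and> c \<notin> L \<and> (\<forall>l\<in>L. E c l)
     \<and> (\<forall>x\<in>L. \<forall>y\<in>L. \<not> E x y) \<and> (v = c \<or> v \<in> L)"
proof -
  from assms(2) obtain \<phi> S where S: "S \<subseteq> V" "v \<in> S" "bij_betw \<phi> {0..<m} S"
    and e: "\<forall>x\<in>{0..<m}. \<forall>y\<in>{0..<m}. star_E m x y \<longleftrightarrow> E (\<phi> x) (\<phi> y)"
    unfolding in_induced_copy_def star_V_def by auto
  have inj: "inj_on \<phi> {0..<m}" and img: "\<phi> ` {0..<m} = S"
    using S(3) by (auto simp: bij_betw_def)
  define c where "c = \<phi> 0"
  define L where "L = \<phi> ` {1..<m}"
  have "card L = m - 1" unfolding L_def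
    by (subst card_image) (auto intro: inj_on_subset[OF inj])
  moreover have "c \<notin> L"
  proof
    assume "c \<in> L"
    then obtain j where j: "1 \<le> j" "j < m" "\<phi> 0 = \<phi> j" unfolding c_def L_def by auto
    have "(0::nat) = j" using inj_onD[OF inj j(3)] j m2 by auto
    then show False using j by simp
  qed
  moreover have "\<forall>l\<in>L. E c l"
  proof
    fix l assume "l \<in> L"
    then obtain j where j: "1 \<le> j" "j < m" "l = \<phi> j" unfolding L_def by auto
    have "star_E m 0 j" using j by (auto simp: star_E_def)
    then show "E c l" using e j m2 unfolding c_def by auto
  qed
  moreover have "\<forall>x\<in>L. \<forall>y\<in>L. \<not> E x y"
  proof (intro ballI)
    fix x y assume "x \<in> L" "y \<in> L"
    then obtain i j where ij: "1 \<le> i" "i < m" "x = \<phi> i" "1 \<le> j" "j < m" "y = \<phi> j"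
      unfolding L_def by auto
    have "\<not> star_E m i j" using ij by (auto simp: star_E_def)
    then show "\<not> E x y" using e ij by auto
  qed
  moreover have "c \<in> V" "L \<subseteq> V" using S img m2 unfolding c_def L_def by auto
  moreover have "v = c \<or> v \<in> L"
  proof -
    from S(2) img obtain i where "i < m" "v = \<phi> i" by auto
    then show ?thesis unfolding c_def L_def by (cases "i = 0") auto
  qed
  ultimately show ?thesis by blast
qed

lemma main_bound:
  fixes V :: "'a set" and E :: "'a \<Rightarrow> 'a \<Rightarrow> bool" and n m :: nat
  assumes fin: "finite V" and ne: "V \<noteq> {}"
    and Ein: "\<And>x y. E x y \<Longrightarrow> x \<in> V \<and> y \<in> V"
    and Esym: "\<And>x y. E x y \<Longrightarrow> E y x"
    and m2: "2 \<le> m" and mn: "m \<le> n"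
    and IND: "\<And>v. v \<in> V \<Longrightarrow> \<exists>S. S \<subseteq> V \<and> v \<in> S \<and> card S = n \<and> (\<forall>x\<in>S. \<forall>y\<in>S. \<not> E x y)"
    and STAR: "\<And>v. v \<in> V \<Longrightarrow> \<exists>c L. c \<in> V \<and> L \<subseteq> V \<and> card L = m - 1 \<and> c \<notin> L \<and> (\<forall>l\<in>L. E c l)
        \<and> (\<forall>x\<in>L. \<forall>y\<in>L. \<not> E x y) \<and> (v = c \<or> v \<in> L)"
  shows "\<exists>d::int. 1 \<le> d \<and> int n \<le> d * (int (card V) - int n + 1 - d)
           \<and> 2 * int m - 2 - d \<le> int (card V) - int n"
proof -
  define nb where "nb v = {u. E v u}" for v
  have nbV: "nb v \<subseteq> V" for v using Ein unfolding nb_def by auto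
  have finnb: "finite (nb v)" for v using finite_subset[OF nbV fin] .
  have hasnb: "\<exists>z. E y z" if "y \<in> V" for y
  proof -
    from STAR[OF that] obtain c L where cL: "card L = m - 1" "\<forall>l\<in>L. E c l" "y = c \<or> y \<in> L"
      by blast
    have "L \<noteq> {}" using cL(1) m2 by auto
    then obtain l where "l \<in> L" by blast
    then show ?thesis using cL Esym by blast
  qed
  obtain v0 where "v0 \<in> V" using ne by blast
  from STAR[OF this] obtain c L where cV: "c \<in> V" and LV: "L \<subseteq> V" and cardL: "card L = m - 1"
    and cL: "c \<notin> L" and Ec: "\<forall>l\<in>L. E c l" and Lind: "\<forall>x\<in>L. \<forall>y\<in>L. \<not> E x y"
    by blast
  from IND[OF cV] obtain K where KV: "K \<subseteq> V" and cK: "c \<in> K" and cardK: "card K = n"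
    and Kind: "\<forall>x\<in>K. \<forall>y\<in>K. \<not> E x y" by blast
  define N where "N = card V"
  define s where "s = N - n"
  have nN: "n \<le> N" unfolding N_def using cardK card_mono[OF fin KV] by simp
  define Ou where "Ou = V - K"
  have finK: "finite K" using finite_subset[OF KV fin] .
  have finOu: "finite Ou" unfolding Ou_def using fin by simp
  have cardO: "card Ou = s" unfolding Ou_def s_def N_def using card_Diff_subset[OF finK KV] cardK by simp
  have LO: "L \<subseteq> Ou" unfolding Ou_def using LV Ec Kind cK by blast
  have ms: "m - 1 \<le> s" using card_mono[OF finOu LO] cardL cardO by simp
  have nbK: "nb y \<subseteq> Ou" if "y \<in> K" for y using nbV[of y] Kind that unfolding Ou_def nb_def by blast
  define f where "f v = card (nb v \<inter> K)" for v
  define d where "d = Max (f ` Ou)"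
  have Lne: "L \<noteq> {}" using cardL m2 by auto
  have One: "Ou \<noteq> {}" using Lne LO by blast
  have fd: "f v \<le> d" if "v \<in> Ou" for v unfolding d_def using finOu that by simp
  have "d \<in> f ` Ou" unfolding d_def using Max_in[of "f ` Ou"] finOu One by auto
  then obtain v1 where v1O: "v1 \<in> Ou" and fv1: "f v1 = d" by auto
  have d1: "1 \<le> d"
  proof -
    obtain l where lL: "l \<in> L" using Lne by blast
    have "c \<in> nb l \<inter> K" using Ec lL cK Esym unfolding nb_def by blast
    then have "1 \<le> f l" unfolding f_def using finnb[of l] card_0_eq[of "nb l \<inter> K"] by fastforce
    then show ?thesis using fd[of l] lL LO by auto
  qed
  show ?thesis
  proof (cases "2 * m \<le> s + d + 2")
    case True
    from IND[of v1] v1O obtain J where JV: "J \<subseteq> V" and v1J: "v1 \<in> J" and cardJ: "card J = n"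
      and Jind: "\<forall>x\<in>J. \<forall>y\<in>J. \<not> E x y" unfolding Ou_def by blast
    have finJ: "finite J" using finite_subset[OF JV fin] .
    define t where "t = card (K - J)"
    have cKJ: "card (K - J) = n - card (K \<inter> J)"
      using card_Diff_subset_Int[of K J] finK cardK by (simp add: Int_commute)
    have cJK: "card (J - K) = n - card (K \<inter> J)"
      using card_Diff_subset_Int[of J K] finJ cardJ by (simp add: Int_commute)
    have KJn: "card (K \<inter> J) \<le> n" using card_mono[OF finK, of "K \<inter> J"] cardK by auto
    have "nb v1 \<inter> K \<subseteq> K - J" using Jind v1J unfolding nb_def by blast
    then have dt: "d \<le> t" using fv1 card_mono[of "K - J"] finK unfolding f_def t_def by auto
    have cover: "K \<inter> J \<subseteq> (\<Union>z\<in>Ou - J. nb z \<inter> K)"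
    proof
      fix y assume y: "y \<in> K \<inter> J"
      then obtain z where Eyz: "E y z" using hasnb KV by blast
      have "z \<in> V" using Ein Eyz by blast
      moreover have "z \<notin> K" using Kind y Eyz by blast
      moreover have "z \<notin> J" using Jind y Eyz by blast
      moreover have "y \<in> nb z \<inter> K" using Esym Eyz y unfolding nb_def by blast
      ultimately show "y \<in> (\<Union>z\<in>Ou - J. nb z \<inter> K)" unfolding Ou_def by blast
    qed
    have "card (K \<inter> J) \<le> (\<Sum>z\<in>Ou - J. card (nb z \<inter> K))"
      using card_mono[OF _ cover] card_UN_le[of "Ou - J" "\<lambda>z. nb z \<inter> K"] finOu finnb
      by (meson finite_Diff finite_UN_I finite_Int le_trans)
    also have "\<dots> \<le> (\<Sum>z\<in>Ou - J. d)" 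
      by (rule sum_mono) (use fd f_def in auto)
    also have "\<dots> = card (Ou - J) * d" by simp
    finally have c1: "card (K \<inter> J) \<le> card (Ou - J) * d" .
    have "Ou \<inter> J = J - K" unfolding Ou_def using JV by blast
    then have "card Ou = card (J - K) + card (Ou - J)"
      using card_Int_Diff[OF finOu, of J] by simp
    then have cOJ: "card (Ou - J) = s - t" "t \<le> s" using cardO cKJ cJK unfolding t_def by auto
    have tn: "t \<le> n" unfolding t_def using cKJ by simp
    have e1: "int (card (K \<inter> J)) = int n - int t" using cKJ KJn unfolding t_def by simp
    have e2: "int (card (Ou - J)) = int s - int t" using cOJ by simp
    have "int (card (K \<inter> J)) \<le> int (card (Ou - J)) * int d"
      using c1 by (metis of_nat_le_iff of_nat_mult)
    then have "int n - int t \<le> (int s - int t) * int d" using e1 e2 by simp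
    moreover have "(int t - int d) * (int d - 1) \<ge> 0" using dt d1 by simp
    ultimately have key: "int n \<le> int d * (int s + 1 - int d)"
      by (simp add: algebra_simps) 
    show ?thesis
    proof (intro exI conjI)
      show "1 \<le> int d" using d1 by simp
      show "int n \<le> int d * (int (card V) - int n + 1 - int d)"
        using key nN unfolding s_def N_def by (simp add: of_nat_diff)
      show "2 * int m - 2 - int d \<le> int (card V) - int n"
        using True nN unfolding s_def N_def by simp
    qed
  next
    case False
    define k where "k = s - (m - 1)"
    define Ep where "Ep = Ou - L"
    have finEp: "finite Ep" unfolding Ep_def using finOu by simp
    have cardEp: "card Ep = k" unfolding Ep_def k_def
      using card_Diff_subset[OF finite_subset[OF LO finOu] LO] cardO cardL by simp
    define C where "C = {y \<in> K. m - 1 \<le> card (nb y)}"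
    have finC: "finite C" unfolding C_def using finK by simp
    have cover: "K \<subseteq> C \<union> (\<Union>z\<in>Ep. nb z \<inter> K)"
    proof
      fix y assume yK: "y \<in> K"
      from STAR[of y] yK KV obtain cy Ly where cyV: "cy \<in> V" and LyV: "Ly \<subseteq> V"
        and cardLy: "card Ly = m - 1" and Ecy: "\<forall>l\<in>Ly. E cy l"
        and Lyind: "\<forall>x\<in>Ly. \<forall>y\<in>Ly. \<not> E x y" and ycy: "y = cy \<or> y \<in> Ly" by blast
      show "y \<in> C \<union> (\<Union>z\<in>Ep. nb z \<inter> K)"
      proof (cases "y = cy")
        case True
        have "Ly \<subseteq> nb y" using Ecy True unfolding nb_def by blast
        then have "m - 1 \<le> card (nb y)" using card_mono[OF finnb] cardLy by metis
        then show ?thesis unfolding C_def using yK by blast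
      next
        case False
        then have yLy: "y \<in> Ly" using ycy by blast
        have Ezy: "E cy y" using Ecy yLy by blast
        have czO: "cy \<in> Ou" unfolding Ou_def using cyV Kind yK Ezy by blast
        have LynB: "Ly \<subseteq> nb cy" using Ecy unfolding nb_def by blast
        have "cy \<notin> L"
        proof
          assume czL: "cy \<in> L"
          have finLy: "finite Ly" using finite_subset[OF LyV fin] .
          have "card (Ly \<inter> K) \<le> f cy" unfolding f_def
            using LynB by (intro card_mono) (auto simp: finnb)
          then have a1: "card (Ly \<inter> K) \<le> d" using fd[OF czO] by simp
          have "Ly - K \<subseteq> Ep"
          proof
            fix u assume u: "u \<in> Ly - K"
            have "u \<in> Ou" using u LyV unfolding Ou_def by blast
            moreover have "u \<notin> L" using Lind czL Ecy u by blast
            ultimately show "u \<in> Ep" unfolding Ep_def by blast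
          qed
          then have a2: "card (Ly - K) \<le> k" using card_mono[OF finEp] cardEp by metis
          have "card Ly = card (Ly \<inter> K) + card (Ly - K)" using card_Int_Diff[OF finLy] by simp
          then have "m - 1 \<le> d + k" using a1 a2 cardLy by simp
          then show False using False ms \<open>\<not> 2 * m \<le> s + d + 2\<close> unfolding k_def by simp
        qed
        then have "cy \<in> Ep" using czO unfolding Ep_def by blast
        moreover have "y \<in> nb cy \<inter> K" using Ezy yK unfolding nb_def by blast
        ultimately show ?thesis by blast
      qed
    qed
    have finU: "finite (\<Union>z\<in>Ep. nb z \<inter> K)" using finEp finK by blast
    have u1: "card (\<Union>z\<in>Ep. nb z \<inter> K) \<le> (\<Sum>z\<in>Ep. card (nb z \<inter> K))"
      by (rule card_UN_le[OF finEp])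
    have u2: "(\<Sum>z\<in>Ep. card (nb z \<inter> K)) \<le> (\<Sum>z\<in>Ep. d)" 
    proof (rule sum_mono)
      fix z assume "z \<in> Ep"
      then have "z \<in> Ou" unfolding Ep_def by blast
      then show "card (nb z \<inter> K) \<le> d" using fd unfolding f_def by blast
    qed
    have "n \<le> card (C \<union> (\<Union>z\<in>Ep. nb z \<inter> K))"
      using card_mono[OF _ cover] cardK finC finU by (metis finite_UnI)
    also have "\<dots> \<le> card C + card (\<Union>z\<in>Ep. nb z \<inter> K)" by (rule card_Un_le)
    also have "\<dots> \<le> card C + k * d" using u1 u2 cardEp by simp
    finally have b1: "n \<le> card C + k * d" .
    have "(m - 1) * card C = (\<Sum>y\<in>C. m - 1)" by simp
    also have "\<dots> \<le> (\<Sum>y\<in>C. card (nb y))" by (rule sum_mono) (simp add: C_def)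
    also have "\<dots> \<le> (\<Sum>y\<in>K. card (nb y))" 
      by (rule sum_mono2[OF finK]) (auto simp: C_def)
    also have "\<dots> = (\<Sum>y\<in>K. \<Sum>z\<in>Ou. if E y z then 1 else 0)"
    proof (rule sum.cong[OF refl])
      fix y assume "y \<in> K"
      then have "nb y = {z \<in> Ou. E y z}" using nbK[of y] unfolding nb_def by blast
      then show "card (nb y) = (\<Sum>z\<in>Ou. if E y z then 1 else 0)"
        using sum.inter_filter[OF finOu, of "\<lambda>_. (1::nat)" "E y"] by simp
    qed
    also have "\<dots> = (\<Sum>z\<in>Ou. \<Sum>y\<in>K. if E y z then 1 else 0)" by (rule sum.swap)
    also have "\<dots> = (\<Sum>z\<in>Ou. f z)"
    proof (rule sum.cong[OF refl])
      fix z assume "z \<in> Ou"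
      have "nb z \<inter> K = {y \<in> K. E y z}" using Esym unfolding nb_def by blast
      then show "(\<Sum>y\<in>K. if E y z then 1 else 0) = f z"
        unfolding f_def using sum.inter_filter[OF finK, of "\<lambda>_. (1::nat)" "\<lambda>y. E y z"] by simp
    qed
    also have "\<dots> \<le> (\<Sum>z\<in>Ou. d)" by (rule sum_mono) (use fd in auto)
    also have "\<dots> = s * d" using cardO by simp
    finally have b2: "(m - 1) * card C \<le> s * d" .
    define M where "M = int m - 1"
    have M1: "1 \<le> M" using m2 unfolding M_def by simp
    have sM: "int s = M + int k" unfolding M_def k_def using ms m2 by simp
    have dM: "int d \<le> M - int k - 1" using False ms m2 unfolding M_def k_def by simp
    have "int n \<le> int (card C + k * d)" using b1 by (simp only: of_nat_le_iff)
    then have B1: "int n \<le> int (card C) + int k * int d" by simp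
    have "int ((m - 1) * card C) \<le> int (s * d)" using b2 by (simp only: of_nat_le_iff)
    moreover have "int (m - 1) = M" unfolding M_def using m2 by simp
    ultimately have B2: "M * int (card C) \<le> int s * int d" by simp
    have "M * int n \<le> M * int (card C) + M * (int k * int d)"
      using mult_left_mono[OF B1, of M] M1 by (simp add: algebra_simps)
    also have "\<dots> \<le> int d * (int s + M * int k)" using B2 by (simp add: algebra_simps)
    also have "\<dots> \<le> int d * (M * (2 * int k + 1))"
    proof (rule mult_left_mono)
      have "1 * int k \<le> M * int k" using M1 by (intro mult_right_mono) auto
      then show "int s + M * int k \<le> M * (2 * int k + 1)" using sM by (simp add: algebra_simps)
    qed simp
    also have "\<dots> \<le> (M - int k) * (M * (2 * int k + 1))"
      by (rule mult_right_mono) (use dM M1 in auto)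
    finally have "M * int n \<le> M * ((M - int k) * (2 * int k + 1))" by (simp add: algebra_simps)
    then have key: "int n \<le> (M - int k) * (2 * int k + 1)" using M1 by simp
    show ?thesis
    proof (intro exI conjI)
      show "1 \<le> M - int k" using dM d1 by simp
      show "int n \<le> (M - int k) * (int (card V) - int n + 1 - (M - int k))"
        using key nN sM unfolding s_def N_def by (simp add: algebra_simps)
      show "2 * int m - 2 - (M - int k) \<le> int (card V) - int n"
        using nN sM unfolding s_def N_def M_def by simp
    qed
  qed
qed

lemma exists_full:
  assumes m2: "2 \<le> m" and mn: "m \<le> n"
  shows "\<exists>(V::nat set) E. simple_graph V E \<and> is_full V E (star_V m) (star_E m) (empty_V n) empty_E
          \<and> card V = 2 * n"
proof -
  define V0 :: "nat set" where "V0 = {0..<2*n}"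
  define E0 where "E0 x y = (x < 2*n \<and> y < 2*n \<and> odd (x + y))" for x y :: nat
  have sg: "simple_graph V0 E0"
    unfolding simple_graph_def V0_def E0_def using m2 mn by auto
  have full: "is_full V0 E0 (star_V m) (star_E m) (empty_V n) empty_E"
    unfolding is_full_def
  proof (intro ballI conjI)
    fix v assume vV: "v \<in> V0"
    then have vn: "v < 2 * n" unfolding V0_def by simp
    define \<phi> where "\<phi> j = (if j = 0 then v else 2 * (j - 1) + (1 - v mod 2))" for j :: nat
    have par: "odd (\<phi> i + \<phi> j) \<longleftrightarrow> (i \<noteq> j \<and> (i = 0 \<or> j = 0))" for i j
      unfolding \<phi>_def by (cases "i = 0"; cases "j = 0"; cases "even v") (auto simp: odd_iff_mod_2_eq_one)
    have inj: "inj_on \<phi> {0..<m}"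
    proof (rule inj_onI)
      fix i j assume "i \<in> {0..<m}" "j \<in> {0..<m}" and eq: "\<phi> i = \<phi> j"
      show "i = j"
      proof (rule ccontr)
        assume "i \<noteq> j"
        show False
        proof (cases "i = 0 \<or> j = 0")
          case True
          then have "odd (\<phi> i + \<phi> j)" using par \<open>i \<noteq> j\<close> by blast
          then show False using eq by simp
        next
          case False
          then show False using eq \<open>i \<noteq> j\<close> unfolding \<phi>_def by auto
        qed
      qed
    qed
    have rng: "\<phi> j < 2 * n" if "j < m" for j
      using that vn m2 mn unfolding \<phi>_def by (cases "j = 0") auto
    show "in_induced_copy V0 E0 (star_V m) (star_E m) v"
      unfolding in_induced_copy_def
    proof (intro exI conjI)
      show "\<phi> ` star_V m \<subseteq> V0" using rng unfolding star_V_def V0_def by auto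
      show "v \<in> \<phi> ` star_V m" using m2 unfolding star_V_def \<phi>_def by force
      show "bij_betw \<phi> (star_V m) (\<phi> ` star_V m)" using inj unfolding star_V_def bij_betw_def by simp
      show "\<forall>x\<in>star_V m. \<forall>y\<in>star_V m. star_E m x y = E0 (\<phi> x) (\<phi> y)"
        using rng par unfolding star_V_def star_E_def E0_def by auto
    qed
    define \<psi> where "\<psi> j = 2 * j + v mod 2" for j :: nat
    show "in_induced_copy V0 E0 (empty_V n) empty_E v"
      unfolding in_induced_copy_def
    proof (intro exI conjI)
      show "\<psi> ` empty_V n \<subseteq> V0" unfolding empty_V_def V0_def \<psi>_def by auto
      have "v = \<psi> (v div 2)" unfolding \<psi>_def by simp
      moreover have "v div 2 \<in> empty_V n" using vn unfolding empty_V_def by auto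
      ultimately show "v \<in> \<psi> ` empty_V n" by blast
      show "bij_betw \<psi> (empty_V n) (\<psi> ` empty_V n)"
        unfolding bij_betw_def inj_on_def \<psi>_def by simp
      show "\<forall>x\<in>empty_V n. \<forall>y\<in>empty_V n. empty_E x y = E0 (\<psi> x) (\<psi> y)"
        unfolding empty_E_def E0_def \<psi>_def by auto
    qed
  qed
  have "card V0 = 2 * n" unfolding V0_def by simp
  then show ?thesis using sg full by blast
qed

theorem lemma4p3:
  fixes n m :: nat
  assumes "2 \<le> m" and "m \<le> n"
  shows "int (f_full (star_V m) (star_E m) (empty_V n) empty_E)
           \<ge> int n + (INF d\<in>{1::int..}.
                max (d - 1 + \<lceil>real n / real_of_int d\<rceil>) (2 * int m - 2 - d))"
proof -
  define P where "P k = (\<exists>(V::nat set) E. simple_graph V E \<and> is_full V E (star_V m) (star_E m) (empty_V n) empty_E \<and> card V = k)" for k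
  have "P (2 * n)" unfolding P_def using exists_full[OF assms] .
  then have "P (LEAST k. P k)" by (rule LeastI)
  moreover have "f_full (star_V m) (star_E m) (empty_V n) empty_E = (LEAST k. P k)"
    unfolding f_full_def P_def by simp
  ultimately have "P (f_full (star_V m) (star_E m) (empty_V n) empty_E)" by simp
  then obtain V :: "nat set" and E where sg: "simple_graph V E"
    and full: "is_full V E (star_V m) (star_E m) (empty_V n) empty_E"
    and cV: "card V = f_full (star_V m) (star_E m) (empty_V n) empty_E"
    unfolding P_def by blast
  have fin: "finite V" and ne: "V \<noteq> {}" and Ein: "\<And>x y. E x y \<Longrightarrow> x \<in> V \<and> y \<in> V"
    and Esym: "\<And>x y. E x y \<Longrightarrow> E y x" using sg unfolding simple_graph_def by auto
  have IND: "\<And>v. v \<in> V \<Longrightarrow> \<exists>S. S \<subseteq> V \<and> v \<in> S \<and> card S = n \<and> (\<forall>x\<in>S. \<forall>y\<in>S. \<not> E x y)"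
  proof -
    fix v assume "v \<in> V"
    then have "in_induced_copy V E (empty_V n) empty_E v" using full unfolding is_full_def by blast
    then show "\<exists>S. S \<subseteq> V \<and> v \<in> S \<and> card S = n \<and> (\<forall>x\<in>S. \<forall>y\<in>S. \<not> E x y)"
      by (rule indep_copy)
  qed
  have STAR: "\<And>v. v \<in> V \<Longrightarrow> \<exists>c L. c \<in> V \<and> L \<subseteq> V \<and> card L = m - 1 \<and> c \<notin> L \<and> (\<forall>l\<in>L. E c l)
        \<and> (\<forall>x\<in>L. \<forall>y\<in>L. \<not> E x y) \<and> (v = c \<or> v \<in> L)"
  proof -
    fix v assume "v \<in> V"
    then have "in_induced_copy V E (star_V m) (star_E m) v" using full unfolding is_full_def by blast
    then show "\<exists>c L. c \<in> V \<and> L \<subseteq> V \<and> card L = m - 1 \<and> c \<notin> L \<and> (\<forall>l\<in>L. E c l)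
        \<and> (\<forall>x\<in>L. \<forall>y\<in>L. \<not> E x y) \<and> (v = c \<or> v \<in> L)" by (rule star_copy[OF assms(1)])
  qed
  obtain d :: int where d1: "1 \<le> d" and dA: "int n \<le> d * (int (card V) - int n + 1 - d)"
    and dB: "2 * int m - 2 - d \<le> int (card V) - int n"
    using main_bound[OF fin ne Ein Esym assms IND STAR] by blast
  define F where "F d = max (d - 1 + \<lceil>real n / real_of_int d\<rceil>) (2 * int m - 2 - d)" for d :: int
  have Fnn: "0 \<le> F x" if "x \<in> {1..}" for x
  proof -
    have "0 \<le> real n / real_of_int x" using that by simp
    then have "0 \<le> \<lceil>real n / real_of_int x\<rceil>" by simp
    then have "0 \<le> x - 1 + \<lceil>real n / real_of_int x\<rceil>" using that by simp
    then show ?thesis unfolding F_def by (rule order_trans[OF _ max.cobounded1])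
  qed
  have bdd: "bdd_below (F ` {1..})" using Fnn by (intro bdd_belowI2) auto
  have "\<lceil>real n / real_of_int d\<rceil> \<le> int (card V) - int n + 1 - d"
  proof -
    have "real_of_int (int n) \<le> real_of_int (d * (int (card V) - int n + 1 - d))"
      using dA by (simp only: of_int_le_iff)
    then have "real n \<le> real_of_int (int (card V) - int n + 1 - d) * real_of_int d"
      by (simp add: mult.commute)
    then have "real n / real_of_int d \<le> real_of_int (int (card V) - int n + 1 - d)"
      using d1 by (simp add: pos_divide_le_eq)
    then show ?thesis by (simp add: ceiling_le_iff)
  qed
  then have Fd: "F d \<le> int (card V) - int n" using dB unfolding F_def by simp
  have "Inf (F ` {1..}) \<le> F d" using d1 by (intro cInf_lower bdd) auto
  also have "\<dots> \<le> int (card V) - int n" by (rule Fd)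
  finally have "Inf (F ` {1..}) \<le> int (card V) - int n" .
  then show ?thesis using cV unfolding F_def by linarith
qed

end
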